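(* Let $d\ge 7$ and let $G$ be a $d$-regular graph with girth $g(G)=5$. If there exists a vertex $x\in V(G)$ that is contained in at most $5$ cycles of length $6$ of the induced subgraph $G[N_2[x]]$, then $\chi_b(G)=d+1$.
   Context: $N_2[x]$ is the set of vertices at distance at most $2$ from $x$, and $G[N_2[x]]$ is the subgraph induced by it. A proper $k$-coloring is a b-coloring if every color class contains a vertex whose closed neighborhood contains all $k$ colors; $\chi_b(G)$ is the largest $k$ for which $G$ has a b-coloring with $k$ colors. *)

theory Defs
  imports Main "HOL-Library.Extended_Nat"
begin

definition simple_graph :: "'a set \<Rightarrow> 'a set set \<Rightarrow> bool" where
  "simple_graph V E \<longleftrightarrow> finite V \<and> (\<forall>e\<in>E. \<exists>u v. e = {u, v} \<and> u \<noteq> v \<and> u \<in> V \<and> v \<in> V)"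

definition adj :: "'a set set \<Rightarrow> 'a \<Rightarrow> 'a \<Rightarrow> bool" where
  "adj E u v \<longleftrightarrow> {u, v} \<in> E"

definition neighbors :: "'a set \<Rightarrow> 'a set set \<Rightarrow> 'a \<Rightarrow> 'a set" where
  "neighbors V E v = {u \<in> V. adj E v u}"

definition closed_nbhd :: "'a set \<Rightarrow> 'a set set \<Rightarrow> 'a \<Rightarrow> 'a set" where
  "closed_nbhd V E v = insert v (neighbors V E v)"

definition regular :: "'a set \<Rightarrow> 'a set set \<Rightarrow> nat \<Rightarrow> bool" where
  "regular V E d \<longleftrightarrow> (\<forall>v\<in>V. card (neighbors V E v) = d)"

text \<open>A cycle of length k (k \<ge> 3) in (V,E), identified with its edge set:
  the edges of a closed walk through k distinct vertices.\<close>

definition cycle_edges :: "'a list \<Rightarrow> 'a set set" where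
  "cycle_edges vs = {{vs ! i, vs ! ((i + 1) mod length vs)} | i. i < length vs}"

definition is_cycle :: "'a set \<Rightarrow> 'a set set \<Rightarrow> nat \<Rightarrow> 'a set set \<Rightarrow> bool" where
  "is_cycle V E k C \<longleftrightarrow> k \<ge> 3 \<and> (\<exists>vs. length vs = k \<and> distinct vs \<and> set vs \<subseteq> V \<and>
      cycle_edges vs \<subseteq> E \<and> C = cycle_edges vs)"

definition cycles :: "'a set \<Rightarrow> 'a set set \<Rightarrow> nat \<Rightarrow> 'a set set set" where
  "cycles V E k = {C. is_cycle V E k C}"

text \<open>Girth: length of a shortest cycle (\<infinity> if acyclic).\<close>

definition girth :: "'a set \<Rightarrow> 'a set set \<Rightarrow> enat" where
  "girth V E = Inf {enat k | k. cycles V E k \<noteq> {}}"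

definition ball2 :: "'a set \<Rightarrow> 'a set set \<Rightarrow> 'a \<Rightarrow> 'a set" where
  "ball2 V E x = {v \<in> V. v = x \<or> adj E x v \<or> (\<exists>w\<in>V. adj E x w \<and> adj E w v)}"

definition induced_edges :: "'a set set \<Rightarrow> 'a set \<Rightarrow> 'a set set" where
  "induced_edges E S = {e \<in> E. e \<subseteq> S}"

definition proper_coloring :: "'a set \<Rightarrow> 'a set set \<Rightarrow> nat \<Rightarrow> ('a \<Rightarrow> nat) \<Rightarrow> bool" where
  "proper_coloring V E k c \<longleftrightarrow> (\<forall>v\<in>V. c v < k) \<and> (\<forall>u\<in>V. \<forall>v\<in>V. adj E u v \<longrightarrow> c u \<noteq> c v)"

definition b_coloring :: "'a set \<Rightarrow> 'a set set \<Rightarrow> nat \<Rightarrow> ('a \<Rightarrow> nat) \<Rightarrow> bool" where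
  "b_coloring V E k c \<longleftrightarrow> proper_coloring V E k c \<and>
     (\<forall>i<k. \<exists>v\<in>V. c v = i \<and> {0..<k} \<subseteq> c ` closed_nbhd V E v)"

definition b_chromatic :: "'a set \<Rightarrow> 'a set set \<Rightarrow> nat" where
  "b_chromatic V E = (GREATEST k. \<exists>c. b_coloring V E k c)"

end

theory Submission
  imports Defs
begin

lemma hall:
  fixes A :: "'i \<Rightarrow> 'c set"
  assumes "finite I" "\<forall>i\<in>I. finite (A i)"
    and "\<forall>J\<subseteq>I. card J \<le> card (\<Union>(A ` J))"
  shows "\<exists>f. inj_on f I \<and> (\<forall>i\<in>I. f i \<in> A i)"
  using assms
proof (induction "card I" arbitrary: I A rule: less_induct)
  case less
  show ?case
  proof (cases "I = {}")
    case True then show ?thesis by auto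
  next
    case False
    show ?thesis
    proof (cases "\<forall>J. J \<subseteq> I \<and> J \<noteq> {} \<and> J \<noteq> I \<longrightarrow> card J < card (\<Union>(A ` J))")
      case True
      obtain i where i: "i \<in> I" using False by auto
      have "card {i} \<le> card (A i)" using less.prems(3) i by (metis cSup_singleton image_empty image_insert empty_subsetI insert_subset)
      then have "A i \<noteq> {}" by auto
      then obtain a where a: "a \<in> A i" by auto
      define I' where "I' = I - {i}"
      define A' where "A' = (\<lambda>j. A j - {a})"
      have cI': "card I' < card I" using i less.prems(1) unfolding I'_def by (metis card_Diff1_less)
      have fin': "finite I'" using less.prems(1) unfolding I'_def by auto
      have fA': "\<forall>j\<in>I'. finite (A' j)" using less.prems(2) unfolding I'_def A'_def by auto
      have hall': "\<forall>J\<subseteq>I'. card J \<le> card (\<Union>(A' ` J))"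
      proof (intro allI impI)
        fix J assume J: "J \<subseteq> I'"
        show "card J \<le> card (\<Union>(A' ` J))"
        proof (cases "J = {}")
          case True then show ?thesis by simp
        next
          case False
          have JI: "J \<subseteq> I" "J \<noteq> I" using J i unfolding I'_def by auto
          then have lt: "card J < card (\<Union>(A ` J))" using True False by blast
          have eq: "\<Union>(A' ` J) = \<Union>(A ` J) - {a}" unfolding A'_def by auto
          have finJ: "finite J" using JI(1) less.prems(1) finite_subset by blast
          have fin: "finite (\<Union>(A ` J))" using finJ JI(1) less.prems(2) by blast
          have "card (\<Union>(A ` J)) \<le> card (\<Union>(A' ` J)) + 1"
            unfolding eq using fin by (cases "a \<in> \<Union>(A ` J)") (auto simp: card_Diff_singleton_if)
          then show ?thesis using lt by simp
        qed
      qed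
      obtain f' where f': "inj_on f' I'" "\<forall>j\<in>I'. f' j \<in> A' j"
        using less.hyps[OF cI' fin' fA' hall'] by blast
      define f where "f = f'(i := a)"
      have "inj_on f I"
      proof -
        have "inj_on f I'" using f'(1) unfolding f_def I'_def inj_on_def by auto
        moreover have "f i \<notin> f ` I'" using f'(2) unfolding f_def A'_def I'_def by auto
        moreover have "I = insert i I'" using i unfolding I'_def by auto
        moreover have "i \<notin> I'" unfolding I'_def by auto
        ultimately show ?thesis by (simp add: inj_on_insert)
      qed
      moreover have "\<forall>j\<in>I. f j \<in> A j" using f'(2) a unfolding f_def A'_def I'_def by auto
      ultimately show ?thesis by blast
    next
      case False
      then obtain J where J: "J \<subseteq> I" "J \<noteq> {}" "J \<noteq> I" "\<not> card J < card (\<Union>(A ` J))" by blast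
      have finJ: "finite J" using J(1) less.prems(1) by (rule finite_subset)
      have cJ: "card J < card I" using J less.prems(1) by (meson psubsetI psubset_card_mono)
      have hallJ: "\<forall>K\<subseteq>J. card K \<le> card (\<Union>(A ` K))" using J(1) less.prems(3) by auto
      obtain f1 where f1: "inj_on f1 J" "\<forall>j\<in>J. f1 j \<in> A j"
        using less.hyps[OF cJ finJ _ hallJ] less.prems(2) J(1) by blast
      define U where "U = \<Union>(A ` J)"
      define A'' where "A'' = (\<lambda>j. A j - U)"
      have finU: "finite U" unfolding U_def using J(1) less.prems(2) finJ by auto
      have cUJ: "card U = card J" using less.prems(3) J unfolding U_def by (meson le_antisym not_le order_refl)
      have cIJ: "card (I - J) < card I" using J less.prems(1)
        proof -
        have "card J > 0" using finJ J(2) by (simp add: card_gt_0_iff)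
        moreover have "card J \<le> card I" using J(1) less.prems(1) by (simp add: card_mono)
        ultimately show ?thesis using J(1) finJ by (simp add: card_Diff_subset)
      qed
      have hall2: "\<forall>K\<subseteq>I - J. card K \<le> card (\<Union>(A'' ` K))"
      proof (intro allI impI)
        fix K assume K: "K \<subseteq> I - J"
        have finK: "finite K" using K less.prems(1) by (meson finite_Diff finite_subset)
        have "card (K \<union> J) \<le> card (\<Union>(A ` (K \<union> J)))" proof -
          have "K \<union> J \<subseteq> I" using K J(1) by auto
          then show ?thesis using less.prems(3) by blast
        qed
        also have "\<Union>(A ` (K \<union> J)) = \<Union>(A'' ` K) \<union> U" unfolding A''_def U_def by auto
        also have "card (\<Union>(A'' ` K) \<union> U) \<le> card (\<Union>(A'' ` K)) + card U" by (rule card_Un_le)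
        finally have "card (K \<union> J) \<le> card (\<Union>(A'' ` K)) + card J" using cUJ by simp
        moreover have "card (K \<union> J) = card K + card J" using K finK finJ by (subst card_Un_disjoint) auto
        ultimately show "card K \<le> card (\<Union>(A'' ` K))" by simp
      qed
      obtain f2 where f2: "inj_on f2 (I - J)" "\<forall>j\<in>I - J. f2 j \<in> A'' j"
        using less.hyps[OF cIJ _ _ hall2] less.prems(1,2) unfolding A''_def by auto
      define f where "f = (\<lambda>j. if j \<in> J then f1 j else f2 j)"
      have "inj_on f I"
        unfolding inj_on_def f_def
      proof (intro ballI impI)
        fix p q assume pq: "p \<in> I" "q \<in> I" "(if p \<in> J then f1 p else f2 p) = (if q \<in> J then f1 q else f2 q)"
        have u1: "\<forall>j\<in>J. f1 j \<in> U" using f1(2) unfolding U_def by auto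
        have u2: "\<forall>j\<in>I-J. f2 j \<notin> U" using f2(2) unfolding A''_def by auto
        show "p = q" using pq u1 u2 f1(1) f2(1) unfolding inj_on_def
          by (metis DiffI)
      qed
      moreover have "\<forall>j\<in>I. f j \<in> A j" using f1(2) f2(2) unfolding f_def A''_def by auto
      ultimately show ?thesis by blast
    qed
  qed
qed

lemma adj_sym: "adj E u v = adj E v u" by (simp add: adj_def insert_commute)

lemma adj_props:
  assumes "simple_graph V E" "adj E u v" shows "u \<in> V" "v \<in> V" "u \<noteq> v"
proof -
  have "{u,v} \<in> E" using assms(2) by (simp add: adj_def)
  then obtain a b where h1: "{u,v} = {a,b}" and h2: "a \<noteq> b" "a \<in> V" "b \<in> V"
    using assms(1) unfolding simple_graph_def by blast
  have "u \<in> {a,b}" "v \<in> {a,b}" unfolding h1[symmetric] by simp_all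
  then show "u \<in> V" "v \<in> V" using h2 by auto
  show "u \<noteq> v"
  proof
    assume "u = v"
    then have "{a,b} = {u}" using h1 by simp
    then have "a \<in> {u}" "b \<in> {u}" by (simp_all add: insert_commute)
    then show False using h2 by auto
  qed
qed

lemma cycle_edges_image: "cycle_edges vs = (\<lambda>i. {vs!i, vs!((i+1) mod length vs)}) ` {..<length vs}"
  by (auto simp: cycle_edges_def)

lemma cycle_edges3: "cycle_edges [a,b,c] = {{a,b},{b,c},{c,a}}"
proof -
  have "{..<Suc (Suc (Suc 0))} = {0, 1, 2}" by auto
  then show ?thesis by (simp add: cycle_edges_image)
qed
lemma cycle_edges4: "cycle_edges [a,b,c,e] = {{a,b},{b,c},{c,e},{e,a}}"
proof -
  have "{..<Suc (Suc (Suc (Suc 0)))} = {0, 1, 2, 3}" by auto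
  then show ?thesis by (simp add: cycle_edges_image)
qed

lemma cycle_edges6: "cycle_edges [a,b,c,e,f,g] = {{a,b},{b,c},{c,e},{e,f},{f,g},{g,a}}"
proof -
  have "{..<Suc (Suc (Suc (Suc (Suc (Suc 0)))))} = {0, 1, 2, 3, 4, 5}" by auto
  then show ?thesis by (simp add: cycle_edges_image)
qed
lemma l1: "{z,u} = {z',u'} \<Longrightarrow> {u,w} = {u',w'} \<Longrightarrow> z\<noteq>w \<Longrightarrow> z'\<noteq>w' \<Longrightarrow> u\<noteq>z \<Longrightarrow> u\<noteq>w \<Longrightarrow> u'\<noteq>z' \<Longrightarrow> u'\<noteq>w'
  \<Longrightarrow> u = u' \<and> {z,w} = {z',w'}"
  by (simp add: doubleton_eq_iff) blast
lemma l2: "{z,u} = {u',w'} \<Longrightarrow> {u,w} = {z',u'} \<Longrightarrow> z\<noteq>w \<Longrightarrow> z'\<noteq>w' \<Longrightarrow> u\<noteq>z \<Longrightarrow> u\<noteq>w \<Longrightarrow> u'\<noteq>z' \<Longrightarrow> u'\<noteq>w'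
  \<Longrightarrow> u = u' \<and> {z,w} = {z',w'}"
  by (simp add: doubleton_eq_iff) blast
lemma six_inj:
  assumes "z\<notin>Q" "u\<notin>Q" "w\<notin>Q" "z'\<notin>Q" "u'\<notin>Q" "w'\<notin>Q" "x\<in>Q" "a\<in>Q" "b\<in>Q" "a'\<in>Q" "b'\<in>Q"
    "z\<noteq>w" "z'\<noteq>w'" "u\<noteq>z" "u\<noteq>w" "u'\<noteq>z'" "u'\<noteq>w'"
    and eq: "{{x,a},{a,z},{z,u},{u,w},{w,b},{b,x}} = {{x,a'},{a',z'},{z',u'},{u',w'},{w',b'},{b',x}}"
  shows "u = u' \<and> {z,w} = {z',w'}"
proof -
  let ?S = "{{x,a'},{a',z'},{z',u'},{u',w'},{w',b'},{b',x}}"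
  have e1: "{z,u} \<in> ?S" unfolding eq[symmetric] by simp
  have e2: "{u,w} \<in> ?S" unfolding eq[symmetric] by simp
  have q1: "{z,u} \<inter> Q = {}" "{u,w} \<inter> Q = {}" using assms(1-3) by auto
  have q2: "{x,a'} \<inter> Q \<noteq> {}" "{a',z'} \<inter> Q \<noteq> {}" "{w',b'} \<inter> Q \<noteq> {}" "{b',x} \<inter> Q \<noteq> {}"
    using assms(7,10,11) by auto
  have n1: "{z,u} \<noteq> {x,a'}" "{z,u} \<noteq> {a',z'}" "{z,u} \<noteq> {w',b'}" "{z,u} \<noteq> {b',x}"
    using q1(1) q2 by auto
  have n2: "{u,w} \<noteq> {x,a'}" "{u,w} \<noteq> {a',z'}" "{u,w} \<noteq> {w',b'}" "{u,w} \<noteq> {b',x}"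
    using q1(2) q2 by auto
  have f1: "{z,u} = {z',u'} \<or> {z,u} = {u',w'}" using e1 n1 by simp
  have f2: "{u,w} = {z',u'} \<or> {u,w} = {u',w'}" using e2 n2 by simp
  have ne: "{z,u} \<noteq> {u,w}" using assms(12-15) by (simp add: doubleton_eq_iff)
  show ?thesis
  proof (cases "{z,u} = {z',u'}")
    case True
    have "{u,w} \<noteq> {z',u'}"
    proof
      assume "{u,w} = {z',u'}" then show False using ne True by simp
    qed
    then have "{u,w} = {u',w'}" using f2 by (elim disjE) simp_all
    then show ?thesis by (rule l1[OF True _ assms(12-17)])
  next
    case False
    then have A: "{z,u} = {u',w'}" using f1 by (elim disjE) simp_all
    have "{u,w} \<noteq> {u',w'}"
    proof
      assume "{u,w} = {u',w'}" then show False using ne A by simp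
    qed
    then have "{u,w} = {z',u'}" using f2 by (elim disjE) simp_all
    then show ?thesis by (rule l2[OF A _ assms(12-17)])
  qed
qed


locale bsetup =
  fixes V :: "'a set" and E :: "'a set set" and d :: nat and x :: 'a
  assumes sg: "simple_graph V E" and d7: "d \<ge> 7" and reg: "regular V E d"
    and no3: "cycles V E 3 = {}" and no4: "cycles V E 4 = {}" and xV: "x \<in> V"
    and cyc6: "card {C \<in> cycles (ball2 V E x) (induced_edges E (ball2 V E x)) 6. x \<in> \<Union>C} \<le> 5"
begin

lemma finV: "finite V" using sg simple_graph_def by blast

lemma adjV: "adj E u v \<Longrightarrow> u \<in> V" "adj E u v \<Longrightarrow> v \<in> V" "adj E u v \<Longrightarrow> u \<noteq> v"
  using adj_props[OF sg] by blast+

lemma no_tri: assumes "adj E a b" "adj E b c" "adj E c a" shows False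
proof -
  have d: "a \<noteq> b" "b \<noteq> c" "c \<noteq> a" "a\<in>V" "b\<in>V" "c\<in>V" using assms adjV by blast+
  have "is_cycle V E 3 (cycle_edges [a,b,c])"
    unfolding is_cycle_def
    apply (rule conjI, simp)
    apply (rule exI[of _ "[a,b,c]"])
    using d assms by (auto simp: cycle_edges3 adj_def)
  then show False using no3 by (simp add: cycles_def)
qed

lemma no_sq: assumes "adj E a b" "adj E b c" "adj E c e" "adj E e a" "a \<noteq> c" "b \<noteq> e" shows False
proof -
  have d: "a \<noteq> b" "b \<noteq> c" "c \<noteq> e" "e \<noteq> a" "a\<in>V" "b\<in>V" "c\<in>V" "e\<in>V" using assms adjV by blast+
  have "is_cycle V E 4 (cycle_edges [a,b,c,e])"
    unfolding is_cycle_def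
    apply (rule conjI, simp)
    apply (rule exI[of _ "[a,b,c,e]"])
    using d assms by (auto simp: cycle_edges4 adj_def)
  then show False using no4 by (simp add: cycles_def)
qed

definition "Y = neighbors V E x"
definition "Z = ball2 V E x - insert x Y"
definition "B y = neighbors V E y - {x}"

lemma Y_iff: "y \<in> Y \<longleftrightarrow> adj E x y"
  unfolding Y_def neighbors_def using adjV by blast

lemma cardY: "card Y = d" using reg xV unfolding regular_def Y_def by blast

lemma finY: "finite Y" unfolding Y_def neighbors_def using finV by simp

lemma Z_iff: "z \<in> Z \<longleftrightarrow> z \<noteq> x \<and> \<not> adj E x z \<and> (\<exists>y\<in>Y. adj E y z)"
  unfolding Z_def ball2_def using Y_iff adjV by blast

lemma finZ: "finite Z" unfolding Z_def ball2_def using finV by simp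

lemma B_iff: "z \<in> B y \<longleftrightarrow> adj E y z \<and> z \<noteq> x"
  unfolding B_def neighbors_def using adjV by blast

lemma finB: "finite (B y)" unfolding B_def neighbors_def using finV by simp

lemma B_Z: assumes "y \<in> Y" "z \<in> B y" shows "z \<in> Z"
proof -
  have a: "adj E x y" "adj E y z" "z \<noteq> x" using assms Y_iff B_iff by auto
  have "\<not> adj E x z" using no_tri[of x y z] a adj_sym by metis
  then show ?thesis using Z_iff a assms(1) by blast
qed

lemma Z_B: "z \<in> Z \<Longrightarrow> \<exists>y\<in>Y. z \<in> B y" using Z_iff B_iff by blast

lemma Z_notY: "z \<in> Z \<Longrightarrow> z \<notin> Y" "z \<in> Z \<Longrightarrow> z \<noteq> x"
  using Z_iff Y_iff by blast+

lemma x_notY: "x \<notin> Y" using Y_iff adjV by blast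

lemma B_disj: assumes "y \<in> Y" "y' \<in> Y" "z \<in> B y" "z \<in> B y'" shows "y = y'"
proof (rule ccontr)
  assume ne: "y \<noteq> y'"
  have "adj E x y" "adj E y z" "adj E z y'" "adj E y' x" "x \<noteq> z"
    using assms Y_iff B_iff adj_sym by metis+
  then show False using no_sq ne by blast
qed

lemma cardB: assumes "y \<in> Y" shows "card (B y) = d - 1"
proof -
  have "y \<in> V" "adj E y x" using assms Y_iff adjV adj_sym by metis+
  then have "card (neighbors V E y) = d" "x \<in> neighbors V E y"
    using reg xV unfolding regular_def neighbors_def by auto
  then show ?thesis unfolding B_def using finV neighbors_def by (simp add: card_Diff_singleton)
qed

lemma B_noadj: assumes "y \<in> Y" "z \<in> B y" "w \<in> B y" shows "\<not> adj E z w"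
  using assms B_iff no_tri adj_sym by metis

lemma uniq_nb: assumes "y \<in> Y" "v \<noteq> y" "u \<in> B y" "u' \<in> B y" "adj E v u" "adj E v u'" shows "u = u'"
proof (rule ccontr)
  assume ne: "u \<noteq> u'"
  have "adj E v u" "adj E u y" "adj E y u'" "adj E u' v" using assms B_iff adj_sym by metis+
  then show False using no_sq ne assms(2) by blast
qed

end

context bsetup begin

definition "blk z = (SOME y. y \<in> Y \<and> adj E y z)"

lemma blk: assumes "z \<in> Z" shows "blk z \<in> Y \<and> adj E (blk z) z"
proof -
  have "\<exists>y. y \<in> Y \<and> adj E y z" using Z_iff assms by blast
  then show ?thesis unfolding blk_def by (rule someI_ex)
qed

definition "cyc u z w = cycle_edges [x, blk z, z, u, w, blk w]"
definition "Cyc = {C \<in> cycles (ball2 V E x) (induced_edges E (ball2 V E x)) 6. x \<in> \<Union>C}"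

lemma finE: "finite E"
proof -
  have "E \<subseteq> Pow V"
  proof
    fix e assume "e \<in> E"
    then obtain u v where "e = {u,v}" "u \<in> V" "v \<in> V" using sg unfolding simple_graph_def by blast
    then show "e \<in> Pow V" by simp
  qed
  then show ?thesis using finV finite_subset by blast
qed

lemma finCyc: "finite Cyc"
proof -
  have "Cyc \<subseteq> Pow E"
  proof
    fix C assume "C \<in> Cyc"
    then have "is_cycle (ball2 V E x) (induced_edges E (ball2 V E x)) 6 C" unfolding Cyc_def cycles_def by simp
    then obtain vs where "cycle_edges vs \<subseteq> induced_edges E (ball2 V E x)" "C = cycle_edges vs"
      unfolding is_cycle_def by blast
    then show "C \<in> Pow E" unfolding induced_edges_def by blast
  qed
  then show ?thesis using finE finite_subset by blast
qed

lemma cardCyc: "card Cyc \<le> 5" using cyc6 unfolding Cyc_def .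

lemma ball2_mem: "x \<in> ball2 V E x" "y \<in> Y \<Longrightarrow> y \<in> ball2 V E x" "z \<in> Z \<Longrightarrow> z \<in> ball2 V E x"
proof -
  show "x \<in> ball2 V E x" unfolding ball2_def using xV by simp
  show "y \<in> Y \<Longrightarrow> y \<in> ball2 V E x" unfolding ball2_def Y_def neighbors_def by simp
  show "z \<in> Z \<Longrightarrow> z \<in> ball2 V E x" unfolding Z_def by blast
qed

lemma cyc_in:
  assumes "u \<in> Z" "z \<in> Z" "w \<in> Z" "adj E u z" "adj E u w" "z \<noteq> w"
  shows "cyc u z w \<in> Cyc"
proof -
  define a where "a = blk z"
  define b where "b = blk w"
  have a: "a \<in> Y" "adj E a z" using blk assms(2) a_def by auto
  have b: "b \<in> Y" "adj E b w" using blk assms(3) b_def by auto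
  have zu: "adj E z u" using assms(4) adj_sym[of E u z] by simp
  have wb: "adj E w b" using b(2) adj_sym[of E b w] by simp
  have ab: "a \<noteq> b"
  proof
    assume "a = b"
    then have "adj E w a" using wb by simp
    moreover have "a \<noteq> u" using a(1) Z_notY(1)[OF assms(1)] by blast
    ultimately show False using no_sq[OF a(2) zu assms(5)] assms(6) by blast
  qed
  have xa: "adj E x a" "adj E x b" using a b Y_iff by auto
  have n1: "x \<noteq> a" "x \<noteq> b" "u \<noteq> z" "u \<noteq> w" using adjV(3)[OF xa(1)] adjV(3)[OF xa(2)] adjV(3)[OF assms(4)] adjV(3)[OF assms(5)] by auto
  have n2: "x \<noteq> z" "x \<noteq> u" "x \<noteq> w" using Z_notY(2)[OF assms(1)] Z_notY(2)[OF assms(2)] Z_notY(2)[OF assms(3)] by auto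
  have n3: "a \<noteq> z" "a \<noteq> u" "a \<noteq> w" "b \<noteq> z" "b \<noteq> u" "b \<noteq> w"
    using Z_notY(1)[OF assms(1)] Z_notY(1)[OF assms(2)] Z_notY(1)[OF assms(3)] a(1) b(1) by auto
  have dist: "distinct [x, a, z, u, w, b]"
    using ab n1 n2 n3 assms(6) by auto
  have sub: "set [x, a, z, u, w, b] \<subseteq> ball2 V E x" using ball2_mem a(1) b(1) assms(1-3) by auto
  have inE: "{x,a} \<in> E" "{a,z} \<in> E" "{z,u} \<in> E" "{u,w} \<in> E" "{w,b} \<in> E" "{b,x} \<in> E"
    using xa a(2) zu assms(5) wb unfolding adj_def by (auto simp: insert_commute)
  have edges: "cycle_edges [x, a, z, u, w, b] \<subseteq> induced_edges E (ball2 V E x)"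
    unfolding cycle_edges6 induced_edges_def using inE sub by auto
  have "is_cycle (ball2 V E x) (induced_edges E (ball2 V E x)) 6 (cycle_edges [x, a, z, u, w, b])"
    unfolding is_cycle_def
    apply (rule conjI, simp)
    apply (rule exI[of _ "[x, a, z, u, w, b]"])
    using dist sub edges by simp
  moreover have "x \<in> \<Union>(cycle_edges [x, a, z, u, w, b])" unfolding cycle_edges6 by auto
  ultimately show ?thesis unfolding Cyc_def cycles_def cyc_def a_def b_def by simp
qed

lemma cyc_inj:
  assumes "u \<in> Z" "z \<in> Z" "w \<in> Z" "adj E u z" "adj E u w" "z \<noteq> w"
    and "u' \<in> Z" "z' \<in> Z" "w' \<in> Z" "adj E u' z'" "adj E u' w'" "z' \<noteq> w'"
    and eq: "cyc u z w = cyc u' z' w'"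
  shows "u = u' \<and> {z,w} = {z',w'}"
proof -
  have e: "{{x,blk z},{blk z,z},{z,u},{u,w},{w,blk w},{blk w,x}} = {{x,blk z'},{blk z',z'},{z',u'},{u',w'},{w',blk w'},{blk w',x}}"
    using eq unfolding cyc_def cycle_edges6 .
  have bl: "blk z \<in> Y" "blk w \<in> Y" "blk z' \<in> Y" "blk w' \<in> Y"
    using blk[OF assms(2)] blk[OF assms(3)] blk[OF assms(8)] blk[OF assms(9)] by auto
  have nz: "z \<notin> insert x Y" "u \<notin> insert x Y" "w \<notin> insert x Y"
     "z' \<notin> insert x Y" "u' \<notin> insert x Y" "w' \<notin> insert x Y" using assms(1-3,7-9) by (simp_all add: Z_notY)
  have ne: "u \<noteq> z" "u \<noteq> w" "u' \<noteq> z'" "u' \<noteq> w'"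
    using adjV(3)[OF assms(4)] adjV(3)[OF assms(5)] adjV(3)[OF assms(10)] adjV(3)[OF assms(11)] by auto
  show ?thesis
    apply (rule six_inj[OF nz _ _ _ _ _ assms(6) assms(12) ne e])
    using bl by auto
qed

end

context bsetup begin

definition "pick p = (SOME q. p = {fst q, snd q} \<and> fst q \<noteq> snd q)"

lemma pick: assumes "card p = 2" shows "p = {fst (pick p), snd (pick p)} \<and> fst (pick p) \<noteq> snd (pick p)"
proof -
  obtain a b where ab: "p = {a,b}" "a \<noteq> b" using assms card_2_iff by metis
  have "\<exists>q. p = {fst q, snd q} \<and> fst q \<noteq> snd q"
    apply (rule exI[of _ "(a,b)"]) using ab by simp
  then show ?thesis unfolding pick_def by (rule someI_ex)
qed

definition "N u = neighbors V E u \<inter> Z"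
definition "PT = {(u,p). u \<in> Z \<and> p \<subseteq> N u \<and> card p = 2}"

lemma N_iff: "z \<in> N u \<longleftrightarrow> z \<in> Z \<and> adj E u z"
  unfolding N_def neighbors_def using adjV by blast

lemma finN: "finite (N u)" unfolding N_def using finZ by simp

lemma finPT: "finite PT"
proof -
  have "PT \<subseteq> Z \<times> Pow Z" unfolding PT_def N_def by auto
  then show ?thesis using finZ finite_subset by blast
qed

lemma cardPT: "card PT \<le> 5"
proof -
  define f where "f = (\<lambda>(u::'a,p). cyc u (fst (pick p)) (snd (pick p)))"
  have pe: "p = {fst (pick p), snd (pick p)}" if "(u,p) \<in> PT" for u p
  proof -
    have "card p = 2" using that unfolding PT_def by auto
    then show ?thesis by (rule conjunct1[OF pick])
  qed
  have mem: "u \<in> Z \<and> fst (pick p) \<in> Z \<and> snd (pick p) \<in> Z \<and> adj E u (fst (pick p)) \<and> adj E u (snd (pick p))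
      \<and> fst (pick p) \<noteq> snd (pick p)"
    if "(u,p) \<in> PT" for u p
  proof -
    have h: "u \<in> Z" "p \<subseteq> N u" "card p = 2" using that unfolding PT_def by auto
    have pk: "fst (pick p) \<noteq> snd (pick p)" using pick[OF h(3)] by auto
    have "fst (pick p) \<in> {fst (pick p), snd (pick p)}" "snd (pick p) \<in> {fst (pick p), snd (pick p)}" by simp_all
    then have "fst (pick p) \<in> p" "snd (pick p) \<in> p" unfolding pe[OF that, symmetric] .
    then have "fst (pick p) \<in> N u" "snd (pick p) \<in> N u" using h(2) by auto
    then show ?thesis using h(1) pk N_iff by auto
  qed
  have "f ` PT \<subseteq> Cyc"
  proof
    fix C assume "C \<in> f ` PT"
    then obtain u p where up: "(u,p) \<in> PT" "C = f (u,p)" by auto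
    have m: "u \<in> Z \<and> fst (pick p) \<in> Z \<and> snd (pick p) \<in> Z \<and> adj E u (fst (pick p)) \<and> adj E u (snd (pick p))
      \<and> fst (pick p) \<noteq> snd (pick p)" by (rule mem[OF up(1)])
    have "cyc u (fst (pick p)) (snd (pick p)) \<in> Cyc" apply (rule cyc_in) using m by auto
    then show "C \<in> Cyc" using up(2) unfolding f_def by simp
  qed
  moreover have "inj_on f PT"
  proof (rule inj_onI)
    fix q q' assume q: "q \<in> PT" "q' \<in> PT" "f q = f q'"
    obtain u p where [simp]: "q = (u,p)" by (cases q)
    obtain u' p' where [simp]: "q' = (u',p')" by (cases q')
    have m: "u \<in> Z \<and> fst (pick p) \<in> Z \<and> snd (pick p) \<in> Z \<and> adj E u (fst (pick p)) \<and> adj E u (snd (pick p))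
      \<and> fst (pick p) \<noteq> snd (pick p)" using mem q(1) by simp
    have m': "u' \<in> Z \<and> fst (pick p') \<in> Z \<and> snd (pick p') \<in> Z \<and> adj E u' (fst (pick p')) \<and> adj E u' (snd (pick p'))
      \<and> fst (pick p') \<noteq> snd (pick p')" using mem q(2) by simp
    have ce: "cyc u (fst (pick p)) (snd (pick p)) = cyc u' (fst (pick p')) (snd (pick p'))" using q(3) unfolding f_def by simp
    have "u = u' \<and> {fst (pick p), snd (pick p)} = {fst (pick p'), snd (pick p')}"
      apply (rule cyc_inj) using m m' ce by auto
    then have uu: "u = u'" and pp: "{fst (pick p), snd (pick p)} = {fst (pick p'), snd (pick p')}" by auto
    have q1: "(u,p) \<in> PT" "(u',p') \<in> PT" using q(1,2) by simp_all
    have "p = {fst (pick p), snd (pick p)}" by (rule pe[OF q1(1)])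
    also have "\<dots> = {fst (pick p'), snd (pick p')}" by (rule pp)
    also have "\<dots> = p'" by (rule pe[OF q1(2), symmetric])
    finally show "q = q'" using uu by simp
  qed
  ultimately have "card PT \<le> card Cyc" using finCyc by (metis card_image card_mono)
  then show ?thesis using cardCyc by simp
qed

definition "D2 = {u \<in> Z. 2 \<le> card (N u)}"

lemma cardD2: "card D2 \<le> 5"
proof -
  define g where "g = (\<lambda>u. (u, SOME p. p \<subseteq> N u \<and> card p = 2))"
  have "g ` D2 \<subseteq> PT"
  proof
    fix q assume "q \<in> g ` D2"
    then obtain u where u: "u \<in> D2" "q = g u" by auto
    have "2 \<le> card (N u)" using u(1) unfolding D2_def by simp
    then obtain T where "T \<subseteq> N u" "card T = 2" by (rule obtain_subset_with_card_n)
    then have "\<exists>p. p \<subseteq> N u \<and> card p = 2" by blast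
    then have "(SOME p. p \<subseteq> N u \<and> card p = 2) \<subseteq> N u \<and> card (SOME p. p \<subseteq> N u \<and> card p = 2) = 2"
      by (rule someI_ex)
    then show "q \<in> PT" using u unfolding g_def PT_def D2_def by auto
  qed
  moreover have "inj_on g D2" unfolding g_def inj_on_def by auto
  ultimately have "card D2 \<le> card PT" using finPT by (metis card_image card_mono)
  then show ?thesis using cardPT by simp
qed

lemma deg3: assumes "u \<in> Z" shows "card (N u) \<le> 3"
proof (rule ccontr)
  assume "\<not> card (N u) \<le> 3"
  then have "4 \<le> card (N u)" by simp
  then obtain T where T: "T \<subseteq> N u" "card T = 4" "finite T" by (rule obtain_subset_with_card_n)
  have "{u} \<times> {p. p \<subseteq> T \<and> card p = 2} \<subseteq> PT" using T(1) assms unfolding PT_def by auto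
  then have "card ({u} \<times> {p. p \<subseteq> T \<and> card p = 2}) \<le> card PT" using finPT by (rule card_mono[rotated])
  moreover have "card ({u} \<times> {p. p \<subseteq> T \<and> card p = 2}) = 6"
    using n_subsets[OF T(3), of 2] T(2) by (simp add: card_cartesian_product choose_two)
  ultimately show False using cardPT by simp
qed

end

context bsetup begin

definition "valid \<kappa> J \<sigma> \<longleftrightarrow> (\<forall>j\<in>J. \<forall>z\<in>B j. \<sigma> z \<in> {1..d} - {\<kappa> j}) \<and> (\<forall>j\<in>J. inj_on \<sigma> (B j)) \<and>
   (\<forall>z\<in>(\<Union>j\<in>J. B j). \<forall>w\<in>(\<Union>j\<in>J. B j). adj E z w \<longrightarrow> \<sigma> z \<noteq> \<sigma> w)"

definition "i0 = (if \<exists>y\<in>Y. 4 \<le> card (B y \<inter> D2) then SOME y. y \<in> Y \<and> 4 \<le> card (B y \<inter> D2) else SOME y. y \<in> Y)"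

lemma Yne: "Y \<noteq> {}" using cardY d7 by auto

lemma i0: "i0 \<in> Y" "(\<exists>y\<in>Y. 4 \<le> card (B y \<inter> D2)) \<Longrightarrow> 4 \<le> card (B i0 \<inter> D2)"
proof -
  show "i0 \<in> Y"
  proof (cases "\<exists>y\<in>Y. 4 \<le> card (B y \<inter> D2)")
    case True
    then have "\<exists>y. y \<in> Y \<and> 4 \<le> card (B y \<inter> D2)" by blast
    then have "(SOME y. y \<in> Y \<and> 4 \<le> card (B y \<inter> D2)) \<in> Y" by (rule someI2_ex) blast
    then show ?thesis using True unfolding i0_def by simp
  next
    case False
    have "\<exists>y. y \<in> Y" using Yne by blast
    then have "(SOME y. y \<in> Y) \<in> Y" by (rule someI_ex)
    then show ?thesis using False unfolding i0_def by simp
  qed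
  assume True: "\<exists>y\<in>Y. 4 \<le> card (B y \<inter> D2)"
  then have "\<exists>y. y \<in> Y \<and> 4 \<le> card (B y \<inter> D2)" by blast
  then have "4 \<le> card (B (SOME y. y \<in> Y \<and> 4 \<le> card (B y \<inter> D2)) \<inter> D2)" by (rule someI2_ex) blast
  then show "4 \<le> card (B i0 \<inter> D2)" using True unfolding i0_def by simp
qed

lemma finD2: "finite D2" unfolding D2_def using finZ by simp

lemma U_Z: "J \<subseteq> Y \<Longrightarrow> (\<Union>j\<in>J. B j) \<subseteq> Z" using B_Z by blast

lemma step:
  assumes kap: "bij_betw \<kappa> Y {1..d}" and v: "valid \<kappa> J \<sigma>" and J: "J \<subseteq> Y" and i: "i \<in> Y" "i \<notin> J"
    and J0: "J = {} \<or> i0 \<in> J"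
  shows "\<exists>\<sigma>'. valid \<kappa> (insert i J) \<sigma>'"
proof -
  define U where "U = (\<Union>j\<in>J. B j)"
  define Ci where "Ci = {1..d} - {\<kappa> i}"
  define A where "A = (\<lambda>z. Ci - \<sigma> ` (neighbors V E z \<inter> U))"
  have UZ: "U \<subseteq> Z" unfolding U_def using U_Z J by blast
  have UBi: "U \<inter> B i = {}" unfolding U_def using B_disj J i by blast
  have ki: "\<kappa> i \<in> {1..d}" using kap i(1) bij_betwE by blast
  have cCi: "card Ci = d - 1" unfolding Ci_def using ki by (simp add: card_Diff_singleton)
  have finCi: "finite Ci" unfolding Ci_def by simp
  have cBi: "card (B i) = d - 1" using cardB i(1) .
  have hallc: "\<forall>S\<subseteq>B i. card S \<le> card (\<Union>(A ` S))"
  proof (intro allI impI)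
    fix S assume S: "S \<subseteq> B i"
    show "card S \<le> card (\<Union>(A ` S))"
    proof (rule ccontr)
      assume lt: "\<not> card S \<le> card (\<Union>(A ` S))"
      define W where "W = \<Union>(A ` S)"
      define T where "T = Ci - W"
      have WC: "W \<subseteq> Ci" unfolding W_def A_def by auto
      have finS: "finite S" using S finB finite_subset by blast
      have cS: "card S \<le> d - 1" using card_mono[OF finB S] cBi by simp
      have cT: "card T = (d - 1) - card W" unfolding T_def using WC finCi cCi by (simp add: card_Diff_subset finite_subset)
      have cT1: "card T + card S > d - 1" using lt cT cS unfolding W_def by linarith
      have Tsub: "T \<subseteq> \<sigma> ` (neighbors V E z \<inter> U)" if "z \<in> S" for z
      proof
        fix c assume c: "c \<in> T"
        then have "c \<in> Ci" "c \<notin> A z" unfolding T_def W_def using that by auto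
        then show "c \<in> \<sigma> ` (neighbors V E z \<inter> U)" unfolding A_def by auto
      qed
      have finNU: "finite (neighbors V E z \<inter> U)" for z using finZ UZ finite_subset by blast
      have cTle: "card T \<le> card (neighbors V E z \<inter> U)" if "z \<in> S" for z
        using card_mono[OF _ Tsub[OF that]] card_image_le[OF finNU[of z]] finNU[of z] by (meson finite_imageI le_trans)
      have NUN: "neighbors V E z \<inter> U \<subseteq> N z" for z unfolding N_def using UZ by auto
      have cNU: "card (neighbors V E z \<inter> U) \<le> card (N z)" for z using card_mono[OF finN NUN] .
      show False
      proof (cases "card T \<ge> 2")
        case True
        have SD: "S \<subseteq> B i \<inter> D2"
        proof
          fix z assume z: "z \<in> S"
          have zZ: "z \<in> Z" using B_Z[OF i(1)] S z by blast
          have "2 \<le> card (N z)" using True cTle[OF z] cNU[of z] by linarith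
          then show "z \<in> B i \<inter> D2" using zZ z S unfolding D2_def by auto
        qed
        have "S \<noteq> {}" using lt by (metis card.empty le0)
        then obtain z0 where z0: "z0 \<in> S" by blast
        have "card T \<le> 3" using cTle[OF z0] cNU[of z0] deg3[of z0] B_Z[OF i(1)] S z0 by force
        then have "card S \<ge> 4" using cT1 d7 by linarith
        then have c4: "4 \<le> card (B i \<inter> D2)" using card_mono[OF _ SD] finB by (meson finite_Int le_trans)
        have "J \<noteq> {}"
        proof
          assume "J = {}"
          then have "U = {}" unfolding U_def by simp
          then show False using cTle[OF z0] True by simp
        qed
        then have i0J: "i0 \<in> J" using J0 by simp
        then have ii0: "i \<noteq> i0" using i(2) by blast
        have c4': "4 \<le> card (B i0 \<inter> D2)" using i0(2) c4 i(1) by blast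
        have disj: "(B i \<inter> D2) \<inter> (B i0 \<inter> D2) = {}" using B_disj i(1) i0(1) ii0 by blast
        have "card ((B i \<inter> D2) \<union> (B i0 \<inter> D2)) = card (B i \<inter> D2) + card (B i0 \<inter> D2)"
          using disj finB by (simp add: card_Un_disjoint)
        moreover have "card ((B i \<inter> D2) \<union> (B i0 \<inter> D2)) \<le> card D2" using finD2 by (simp add: card_mono)
        ultimately show False using c4 c4' cardD2 by linarith
      next
        case False
        then have "card T = 1" using cT1 cS cT by linarith
        then obtain c where Tc: "T = {c}" using card_1_singletonE by blast
        have "card S = d - 1" using cT1 cS \<open>card T = 1\<close> by linarith
        then have SB: "S = B i" using card_subset_eq[OF finB S] cBi by simp
        have cC: "c \<in> Ci" using Tc unfolding T_def by auto
        have ex: "\<exists>j. j \<in> J \<and> (\<exists>u\<in>B j. adj E z u \<and> \<sigma> u = c)" if "z \<in> B i" for z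
        proof -
          have "c \<in> \<sigma> ` (neighbors V E z \<inter> U)" using Tsub[of z] that SB Tc by auto
          then obtain u where "u \<in> neighbors V E z" "u \<in> U" "\<sigma> u = c" by auto
          then show ?thesis unfolding U_def neighbors_def by auto
        qed
        define jz where "jz = (\<lambda>z. SOME j. j \<in> J \<and> (\<exists>u\<in>B j. adj E z u \<and> \<sigma> u = c))"
        have jz: "jz z \<in> J \<and> (\<exists>u\<in>B (jz z). adj E z u \<and> \<sigma> u = c)" if "z \<in> B i" for z
          unfolding jz_def using someI_ex[OF ex[OF that]] .
        have cd: "c \<in> {1..d}" using cC unfolding Ci_def by auto
        define yc where "yc = inv_into Y \<kappa> c"
        have yc: "yc \<in> Y" "\<kappa> yc = c" unfolding yc_def using kap cd
          by (metis bij_betw_def inv_into_into f_inv_into_f)+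
        have yci: "yc \<noteq> i" using yc(2) cC unfolding Ci_def by auto
        have jzY: "jz ` B i \<subseteq> Y - {i, yc}"
        proof
          fix j assume "j \<in> jz ` B i"
          then obtain z where z: "z \<in> B i" "j = jz z" by auto
          obtain u where u: "u \<in> B j" "adj E z u" "\<sigma> u = c" using jz[OF z(1)] z(2) by blast
          have jJ: "j \<in> J" using jz[OF z(1)] z(2) by simp
          have "\<sigma> u \<in> {1..d} - {\<kappa> j}" using v jJ u(1) unfolding valid_def by blast
          then have "j \<noteq> yc" using u(3) yc(2) by auto
          then show "j \<in> Y - {i, yc}" using jJ J i(2) by auto
        qed
        have injz: "inj_on jz (B i)"
        proof (rule inj_onI)
          fix z z' assume zz: "z \<in> B i" "z' \<in> B i" "jz z = jz z'"
          obtain u where u: "u \<in> B (jz z)" "adj E z u" "\<sigma> u = c" using jz[OF zz(1)] by blast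
          obtain u' where u': "u' \<in> B (jz z)" "adj E z' u'" "\<sigma> u' = c" using jz[OF zz(2)] zz(3) by auto
          have "jz z \<in> J" using jz[OF zz(1)] by simp
          then have "inj_on \<sigma> (B (jz z))" using v unfolding valid_def by blast
          then have uu: "u = u'" using u u' by (metis inj_on_def)
          have uZ: "u \<in> Z" using B_Z u(1) \<open>jz z \<in> J\<close> J by blast
          have "u \<noteq> i" using Z_notY(1)[OF uZ] i(1) by blast
          then show "z = z'" using uniq_nb[OF i(1) _ zz(1) zz(2)] u(2) u'(2) uu adj_sym by metis
        qed
        have "card (B i) \<le> card (Y - {i, yc})" using card_inj_on_le[OF injz jzY] finY by simp
        moreover have "card (Y - {i, yc}) = d - 2" using finY i(1) yc(1) yci cardY by (simp add: card_Diff_subset)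
        ultimately show False using cBi d7 by linarith
      qed
    qed
  qed
  have finA: "\<forall>z\<in>B i. finite (A z)" unfolding A_def using finCi by simp
  obtain f where f: "inj_on f (B i)" "\<forall>z\<in>B i. f z \<in> A z" using hall[OF finB finA hallc] by blast
  define \<sigma>' where "\<sigma>' = (\<lambda>v. if v \<in> B i then f v else \<sigma> v)"
  have "valid \<kappa> (insert i J) \<sigma>'"
    unfolding valid_def
  proof (intro conjI)
    show "\<forall>j\<in>insert i J. \<forall>z\<in>B j. \<sigma>' z \<in> {1..d} - {\<kappa> j}"
    proof (intro ballI)
      fix j z assume j: "j \<in> insert i J" and z: "z \<in> B j"
      show "\<sigma>' z \<in> {1..d} - {\<kappa> j}"
      proof (cases "j = i")
        case True then show ?thesis using f(2) z unfolding \<sigma>'_def A_def Ci_def by auto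
      next
        case False
        then have "j \<in> J" "z \<notin> B i" using j z UBi unfolding U_def by auto
        then show ?thesis using v z unfolding valid_def \<sigma>'_def by auto
      qed
    qed
    show "\<forall>j\<in>insert i J. inj_on \<sigma>' (B j)"
    proof
      fix j assume j: "j \<in> insert i J"
      show "inj_on \<sigma>' (B j)"
      proof (cases "j = i")
        case True then show ?thesis using f(1) unfolding \<sigma>'_def inj_on_def by auto
      next
        case False
        then have "j \<in> J" "B j \<inter> B i = {}" using j UBi unfolding U_def by auto
        then show ?thesis using v unfolding valid_def \<sigma>'_def inj_on_def by auto
      qed
    qed
    show "\<forall>z\<in>(\<Union>j\<in>insert i J. B j). \<forall>w\<in>(\<Union>j\<in>insert i J. B j). adj E z w \<longrightarrow> \<sigma>' z \<noteq> \<sigma>' w"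
    proof (intro ballI impI)
      fix z w assume z: "z \<in> (\<Union>j\<in>insert i J. B j)" and w: "w \<in> (\<Union>j\<in>insert i J. B j)" and a: "adj E z w"
      have cross: "\<sigma>' p \<noteq> \<sigma>' q" if p: "p \<in> B i" and q: "q \<in> U" and pq: "adj E p q" for p q
      proof -
        have "q \<notin> B i" using q UBi by blast
        moreover have "q \<in> neighbors V E p" using pq adjV unfolding neighbors_def by blast
        ultimately show ?thesis using f(2) p q unfolding \<sigma>'_def A_def by auto
      qed
      have zU: "z \<in> B i \<or> z \<in> U" "w \<in> B i \<or> w \<in> U" using z w unfolding U_def by auto
      show "\<sigma>' z \<noteq> \<sigma>' w"
      proof (cases "z \<in> B i")
        case zi: True
        show ?thesis
        proof (cases "w \<in> B i")
          case True then show ?thesis using B_noadj[OF i(1) zi True] a by simp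
        next
          case False then show ?thesis using cross[OF zi _ a] zU by simp
        qed
      next
        case zn: False
        then have zU': "z \<in> U" using zU by simp
        show ?thesis
        proof (cases "w \<in> B i")
          case True then show ?thesis using cross[OF True zU'] a adj_sym by metis
        next
          case False
          then have "w \<in> U" using zU by simp
          then show ?thesis using v zU' zn False a unfolding valid_def \<sigma>'_def U_def by auto
        qed
      qed
    qed
  qed
  then show ?thesis by blast
qed

end


lemma greedy:
  assumes sg: "simple_graph V E" and deg: "\<forall>v\<in>V. card (neighbors V E v) \<le> d" and PV: "P \<subseteq> V"
    and cP: "\<forall>v\<in>P. c v < d+1" and pP: "\<forall>u\<in>P. \<forall>v\<in>P. adj E u v \<longrightarrow> c u \<noteq> c v"
  shows "\<exists>c'. (\<forall>v\<in>P. c' v = c v) \<and> proper_coloring V E (d+1) c'"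
proof -
  have finV: "finite V" using sg simple_graph_def by blast
  have gen: "\<exists>c'. (\<forall>v\<in>P. c' v = c v) \<and> (\<forall>v\<in>P \<union> R. c' v < d+1) \<and> (\<forall>u\<in>P \<union> R. \<forall>v\<in>P \<union> R. adj E u v \<longrightarrow> c' u \<noteq> c' v)"
    if "finite R" "R \<subseteq> V" for R
    using that
  proof (induction R rule: finite_induct)
    case empty then show ?case using cP pP by (intro exI[of _ c]) auto
  next
    case (insert r R)
    then obtain c' where c': "\<forall>v\<in>P. c' v = c v" "\<forall>v\<in>P \<union> R. c' v < d+1"
      "\<forall>u\<in>P \<union> R. \<forall>v\<in>P \<union> R. adj E u v \<longrightarrow> c' u \<noteq> c' v" by auto
    show ?case
    proof (cases "r \<in> P")
      case True
      then have "P \<union> insert r R = P \<union> R" by auto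
      then show ?thesis using c' by auto
    next
      case False
      define used where "used = c' ` (neighbors V E r \<inter> (P \<union> R))"
      have finn: "finite (neighbors V E r)" unfolding neighbors_def using finV by simp
      have "card used \<le> card (neighbors V E r \<inter> (P \<union> R))" unfolding used_def
        by (rule card_image_le) (use finn in simp)
      also have "\<dots> \<le> card (neighbors V E r)" using finn by (simp add: card_mono)
      also have "\<dots> \<le> d" using deg insert.prems by simp
      finally have cu: "card used \<le> d" .
      have fu: "finite used" unfolding used_def using finn by simp
      have "\<not> {0..<d+1} \<subseteq> used"
      proof
        assume "{0..<d+1} \<subseteq> used"
        then have "card {0..<d+1} \<le> card used" by (rule card_mono[OF fu])
        then show False using cu by simp
      qed
      then obtain k where k0: "k \<in> {0..<d+1}" "k \<notin> used" by blast
      then have k: "k < d+1" "k \<notin> used" by auto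
      define c'' where "c'' = c'(r := k)"
      have "(\<forall>v\<in>P. c'' v = c v) \<and> (\<forall>v\<in>P \<union> insert r R. c'' v < d+1) \<and>
          (\<forall>u\<in>P \<union> insert r R. \<forall>v\<in>P \<union> insert r R. adj E u v \<longrightarrow> c'' u \<noteq> c'' v)"
      proof (intro conjI ballI impI)
        fix v assume "v \<in> P" then show "c'' v = c v" using c'(1) False unfolding c''_def by auto
      next
        fix v assume "v \<in> P \<union> insert r R" then show "c'' v < d+1" using c'(2) k(1) unfolding c''_def by auto
      next
        fix u v assume u: "u \<in> P \<union> insert r R" and v: "v \<in> P \<union> insert r R" and a: "adj E u v"
        have uv: "u \<noteq> v" using adj_props(3)[OF sg a] .
        show "c'' u \<noteq> c'' v"
        proof (cases "u = r")
          case True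
          then have "v \<in> P \<union> R" "v \<in> neighbors V E r" using v uv a adj_props(2)[OF sg a] unfolding neighbors_def by auto
          then have "c' v \<in> used" unfolding used_def by auto
          then show ?thesis using True uv k(2) unfolding c''_def by auto
        next
          case ur: False
          show ?thesis
          proof (cases "v = r")
            case True
            have a': "adj E r u" using a True adj_sym by metis
            then have "u \<in> P \<union> R" "u \<in> neighbors V E r" using u ur adj_props(1)[OF sg a] unfolding neighbors_def by auto
            then have "c' u \<in> used" unfolding used_def by auto
            then show ?thesis using True uv k(2) unfolding c''_def by auto
          next
            case False
            then have "u \<in> P \<union> R" "v \<in> P \<union> R" using u v ur by auto
            then show ?thesis using c'(3) a ur False unfolding c''_def by auto
          qed
        qed
      qed
      then show ?thesis by blast
    qed
  qed
  obtain c' where c': "\<forall>v\<in>P. c' v = c v" "\<forall>v\<in>P \<union> (V - P). c' v < d+1"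
    "\<forall>u\<in>P \<union> (V - P). \<forall>v\<in>P \<union> (V - P). adj E u v \<longrightarrow> c' u \<noteq> c' v"
    using gen[of "V - P"] finV by auto
  have "P \<union> (V - P) = V" using PV by auto
  then show ?thesis using c' unfolding proper_coloring_def by auto
qed

lemma b_upper:
  assumes sg: "simple_graph V E" and reg: "regular V E d" and b: "b_coloring V E k c"
  shows "k \<le> d + 1"
proof (cases "k = 0")
  case True then show ?thesis by simp
next
  case False
  then obtain v where v: "v \<in> V" "{0..<k} \<subseteq> c ` closed_nbhd V E v" using b unfolding b_coloring_def by auto
  have finV: "finite V" using sg simple_graph_def by blast
  have fin: "finite (closed_nbhd V E v)" unfolding closed_nbhd_def neighbors_def using finV by simp
  have "k = card {0..<k}" by simp
  also have "\<dots> \<le> card (c ` closed_nbhd V E v)" using card_mono[OF finite_imageI[OF fin] v(2)] .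
  also have "\<dots> \<le> card (closed_nbhd V E v)" using fin by (rule card_image_le)
  also have "\<dots> \<le> card (neighbors V E v) + 1" unfolding closed_nbhd_def by (simp add: card_insert_le_m1 card_insert_if)
  also have "\<dots> = d + 1" using reg v(1) unfolding regular_def by simp
  finally show ?thesis .
qed

context bsetup begin

lemma valid_empty: "valid \<kappa> {} \<sigma>" unfolding valid_def by simp

lemma allblocks: assumes kap: "bij_betw \<kappa> Y {1..d}" shows "\<exists>\<sigma>. valid \<kappa> Y \<sigma>"
proof -
  have gen: "\<exists>\<sigma>. valid \<kappa> (insert i0 J) \<sigma>" if "finite J" "J \<subseteq> Y - {i0}" for J
    using that
  proof (induction J rule: finite_induct)
    case empty
    show ?case using step[OF kap valid_empty[of \<kappa> "\<lambda>_. 0"], of i0] i0(1) by simp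
  next
    case (insert j J)
    then obtain \<sigma> where s: "valid \<kappa> (insert i0 J) \<sigma>" by auto
    have "\<exists>\<sigma>'. valid \<kappa> (insert j (insert i0 J)) \<sigma>'"
      apply (rule step[OF kap s])
      using insert.prems insert.hyps i0(1) by auto
    then show ?case by (simp add: insert_commute)
  qed
  have "insert i0 (Y - {i0}) = Y" using i0(1) by auto
  then show ?thesis using gen[of "Y - {i0}"] finY by simp
qed

lemma nbr_x: "neighbors V E x = Y" unfolding Y_def ..

lemma nbr_y: assumes "y \<in> Y" shows "neighbors V E y = insert x (B y)"
proof -
  have "adj E y x" using assms Y_iff adj_sym by metis
  then have "x \<in> neighbors V E y" using xV unfolding neighbors_def by simp
  then show ?thesis unfolding B_def by auto
qed

theorem main: "b_chromatic V E = d + 1"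
proof -
  have "\<exists>h. bij_betw h Y {1..d}" using finite_same_card_bij[OF finY, of "{1..d}"] cardY by simp
  then obtain \<kappa> where kap: "bij_betw \<kappa> Y {1..d}" by blast
  obtain \<sigma> where s: "valid \<kappa> Y \<sigma>" using allblocks[OF kap] by blast
  define P where "P = insert x (Y \<union> Z)"
  define c0 where "c0 = (\<lambda>v. if v = x then 0 else if v \<in> Y then \<kappa> v else \<sigma> v)"
  have kY: "\<kappa> y \<in> {1..d}" if "y \<in> Y" for y using kap that bij_betwE by blast
  have sB: "\<sigma> z \<in> {1..d} - {\<kappa> y}" if "y \<in> Y" "z \<in> B y" for y z using s that unfolding valid_def by blast
  have ZU: "Z = (\<Union>y\<in>Y. B y)" using Z_B B_Z by blast
  have PV: "P \<subseteq> V" unfolding P_def using xV unfolding Y_def Z_def ball2_def neighbors_def by auto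
  have c0Z: "c0 z = \<sigma> z" if "z \<in> Z" for z using Z_notY[OF that] unfolding c0_def by simp
  have c0Y: "c0 y = \<kappa> y" if "y \<in> Y" for y using that x_notY unfolding c0_def by auto
  have c0x: "c0 x = 0" unfolding c0_def by simp
  have cP: "\<forall>v\<in>P. c0 v < d+1"
  proof
    fix v assume "v \<in> P"
    then consider "v = x" | "v \<in> Y" | "v \<in> Z" unfolding P_def by auto
    then show "c0 v < d+1"
    proof cases
      case 1 then show ?thesis using c0x by simp
    next
      case 2 then show ?thesis using c0Y kY by fastforce
    next
      case 3
      then obtain y where "y \<in> Y" "v \<in> B y" using Z_B by blast
      then show ?thesis using c0Z[OF 3] sB by fastforce
    qed
  qed
  have edgeYZ: "c0 u \<noteq> c0 v" if "u \<in> Y" "v \<in> Z" "adj E u v" for u v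
  proof -
    have "v \<in> B u" using that Z_notY(2) B_iff by blast
    then have "\<sigma> v \<noteq> \<kappa> u" using sB[OF that(1)] by blast
    then show ?thesis using c0Z[OF that(2)] c0Y[OF that(1)] by simp
  qed
  have noYY: "\<not> adj E u v" if "u \<in> Y" "v \<in> Y" for u v
  proof
    assume a: "adj E u v"
    have "adj E x u" "adj E v x" using that Y_iff adj_sym[of E v x] by auto
    then show False using no_tri a by blast
  qed
  have pP: "\<forall>u\<in>P. \<forall>v\<in>P. adj E u v \<longrightarrow> c0 u \<noteq> c0 v"
  proof (intro ballI impI)
    fix u v assume u: "u \<in> P" and v: "v \<in> P" and a: "adj E u v"
    have a': "adj E v u" using a adj_sym by metis
    have xv: "c0 x \<noteq> c0 w" if "adj E x w" for w
    proof -
      have "w \<in> Y" using that Y_iff by simp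
      then show ?thesis using c0x c0Y kY by fastforce
    qed
    consider "u = x" | "v = x" | "u \<in> Y" "v \<in> Y" | "u \<in> Y" "v \<in> Z" | "u \<in> Z" "v \<in> Y" | "u \<in> Z" "v \<in> Z"
      using u v unfolding P_def by auto
    then show "c0 u \<noteq> c0 v"
    proof cases
      case 1 then show ?thesis using xv a by simp
    next
      case 2
      then have "c0 x \<noteq> c0 u" using xv a' by simp
      then show ?thesis using 2 by simp
    next
      case 3 then show ?thesis using noYY a by blast
    next
      case 4 then show ?thesis using edgeYZ a by blast
    next
      case 5 then have "c0 v \<noteq> c0 u" using edgeYZ a' by blast
      then show ?thesis by simp
    next
      case 6
      then have "u \<in> (\<Union>j\<in>Y. B j)" "v \<in> (\<Union>j\<in>Y. B j)" using ZU by auto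
      then have "\<sigma> u \<noteq> \<sigma> v" using s a unfolding valid_def by blast
      then show ?thesis using c0Z 6 by simp
    qed
  qed
  have deg: "\<forall>v\<in>V. card (neighbors V E v) \<le> d" using reg unfolding regular_def by simp
  obtain col where col: "\<forall>v\<in>P. col v = c0 v" "proper_coloring V E (d+1) col"
    using greedy[OF sg deg PV cP pP] by blast
  have bcol: "b_coloring V E (d+1) col"
    unfolding b_coloring_def
  proof (intro conjI allI impI)
    show "proper_coloring V E (d+1) col" by (rule col(2))
    fix i assume i: "i < d+1"
    show "\<exists>v\<in>V. col v = i \<and> {0..<d+1} \<subseteq> col ` closed_nbhd V E v"
    proof (cases "i = 0")
      case True
      have "col x = 0" using col(1) c0x unfolding P_def by simp
      moreover have "{0..<d+1} \<subseteq> col ` closed_nbhd V E x"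
      proof
        fix k assume k: "k \<in> {0..<d+1}"
        show "k \<in> col ` closed_nbhd V E x"
        proof (cases "k = 0")
          case True then show ?thesis using \<open>col x = 0\<close> unfolding closed_nbhd_def by force
        next
          case False
          then have "k \<in> {1..d}" using k by auto
          then obtain y where y: "y \<in> Y" "\<kappa> y = k" using kap by (metis bij_betw_def imageE)
          have "col y = k" using col(1) c0Y[OF y(1)] y unfolding P_def by simp
          then show ?thesis using y(1) nbr_x unfolding closed_nbhd_def by force
        qed
      qed
      ultimately show ?thesis using True xV by blast
    next
      case False
      then have "i \<in> {1..d}" using i by auto
      then obtain y where y: "y \<in> Y" "\<kappa> y = i" using kap by (metis bij_betw_def imageE)
      have yV: "y \<in> V" using y(1) unfolding Y_def neighbors_def by simp
      have cy: "col y = i" using col(1) c0Y[OF y(1)] y unfolding P_def by simp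
      have sBy: "\<sigma> ` B y = {1..d} - {i}"
      proof (rule card_subset_eq)
        show "finite ({1..d} - {i})" by simp
        show "\<sigma> ` B y \<subseteq> {1..d} - {i}" using sB[OF y(1)] y(2) by auto
        have "inj_on \<sigma> (B y)" using s y(1) unfolding valid_def by blast
        then have "card (\<sigma> ` B y) = d - 1" using card_image cardB[OF y(1)] by metis
        then show "card (\<sigma> ` B y) = card ({1..d} - {i})" using \<open>i \<in> {1..d}\<close> by (simp add: card_Diff_singleton)
      qed
      have colB: "col ` B y = \<sigma> ` B y"
      proof (rule image_cong[OF refl])
        fix z assume "z \<in> B y"
        then have "z \<in> Z" using B_Z y(1) by blast
        then show "col z = \<sigma> z" using col(1) c0Z unfolding P_def by simp
      qed
      have "{0..<d+1} \<subseteq> col ` closed_nbhd V E y"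
      proof
        fix k assume k: "k \<in> {0..<d+1}"
        have cx: "col x = 0" using col(1) c0x unfolding P_def by simp
        have ce: "closed_nbhd V E y = insert y (insert x (B y))" unfolding closed_nbhd_def nbr_y[OF y(1)] ..
        consider "k = 0" | "k = i" | "k \<in> {1..d} - {i}" using k by force
        then show "k \<in> col ` closed_nbhd V E y"
        proof cases
          case 1 then show ?thesis using cx ce by simp
        next
          case 2 then show ?thesis using cy ce by simp
        next
          case 3 then have "k \<in> col ` B y" using colB sBy by simp
          then show ?thesis using ce by auto
        qed
      qed
      then show ?thesis using cy yV by blast
    qed
  qed
  show ?thesis unfolding b_chromatic_def
  proof (rule Greatest_equality)
    show "\<exists>c. b_coloring V E (d + 1) c" using bcol by blast
    fix k assume "\<exists>c. b_coloring V E k c"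
    then show "k \<le> d + 1" using b_upper[OF sg reg] by blast
  qed
qed

end

theorem mainTheorem7:
  fixes V :: "'a set" and E :: "'a set set" and d :: nat
  assumes "simple_graph V E"
    and "d \<ge> 7"
    and "regular V E d"
    and "girth V E = 5"
    and "\<exists>x\<in>V. card {C \<in> cycles (ball2 V E x) (induced_edges E (ball2 V E x)) 6. x \<in> \<Union>C} \<le> 5"
  shows "b_chromatic V E = d + 1"
proof -
  obtain x where x: "x \<in> V" "card {C \<in> cycles (ball2 V E x) (induced_edges E (ball2 V E x)) 6. x \<in> \<Union>C} \<le> 5"
    using assms(5) by blast
  have nok: "cycles V E k = {}" if "k < 5" for k
  proof (rule ccontr)
    assume "cycles V E k \<noteq> {}"
    then have "enat k \<in> {enat k | k. cycles V E k \<noteq> {}}" by blast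
    then have "girth V E \<le> enat k" unfolding girth_def by (rule Inf_lower)
    then have "(5::enat) \<le> enat k" using assms(4) by simp
    then show False using that by (simp add: numeral_eq_enat)
  qed
  interpret bsetup V E d x
    using assms(1-3) nok[of 3] nok[of 4] x by unfold_locales auto
  show ?thesis by (rule main)
qed

end
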